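(* Let $n\ge 7$ with $3\nmid n$, $\zeta_n=e^{2\pi i/n}$, $K=\mathbb{Q}(\zeta_n)$, and let $J=\{0,1,3\}$ or $J=\{0,2,3\}$, written $J=\{j_1<j_2<j_3\}$. Let $G$ be the $3\times n$ matrix over $K$ with $G_{i,l}=\zeta_n^{j_i(l-1)}$ ($1\le i\le 3$, $1\le l\le n$). Let $P_{\mathrm{bad}}$ be the set of rational primes $p$ dividing $|N_{K/\mathbb{Q}}(\Delta)|$ for some non-zero determinant $\Delta$ of a $3\times 3$ submatrix of $G$. Let $p\notin P_{\mathrm{bad}}$ be a prime with $p\nmid n$, $\mathfrak{p}$ a prime ideal of $\mathbb{Z}[\zeta_n]$ lying above $p$, $\rho:\mathbb{Z}[\zeta_n]\to\mathbb{Z}[\zeta_n]/\mathfrak{p}\cong\mathbb{F}_{p^f}$ the reduction map ($f$ the multiplicative order of $p$ modulo $n$), and $\overline{G}=\rho(G)$. Then the code generated by $\overline{G}$ is a cyclic MDS code of length $n$ and dimension $3$ over $\mathbb{F}_{p^f}$ that is of non-RS type.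
   Context: A linear $[n,k]$ code is MDS if its minimum distance is $n-k+1$; cyclic means invariant under cyclic shift of coordinates. A code is of RS type if it is equivalent (change of generator matrix, column permutation, non-zero column scaling) to a generalized Reed–Solomon code with generator matrix $(v_j x_j^{i-1})$, $x_j$ distinct, $v_j\neq 0$; otherwise it is of non-RS type. $N_{K/\mathbb{Q}}$ is the field norm. *)

theory Defs
  imports Complex_Main "HOL-Library.Function_Algebras"
    "HOL-Computational_Algebra.Polynomial" "HOL-Number_Theory.Number_Theory" "HOL-Combinatorics.Permutations"
begin

definition zeta :: "nat \<Rightarrow> complex" where
  "zeta n = cis (2 * pi / real n)"

definition Zzeta :: "nat \<Rightarrow> complex set" where
  "Zzeta n = {poly (map_poly of_int g) (zeta n) | g :: int poly. True}"

text \<open>Matrix G with entries z^(j_i * l), rows i = 0,1,2, columns l = 0..n-1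
  (0-indexed version of zeta^(j_i (l-1))).\<close>
definition Gmat :: "nat list \<Rightarrow> 'b::comm_ring_1 \<Rightarrow> nat \<Rightarrow> nat \<Rightarrow> 'b" where
  "Gmat js z i l = z ^ (js ! i * l)"

definition det3 :: "(nat \<Rightarrow> nat \<Rightarrow> 'b::comm_ring_1) \<Rightarrow> 'b" where
  "det3 M = M 0 0 * (M 1 1 * M 2 2 - M 1 2 * M 2 1)
          - M 0 1 * (M 1 0 * M 2 2 - M 1 2 * M 2 0)
          + M 0 2 * (M 1 0 * M 2 1 - M 1 1 * M 2 0)"

definition minor3 :: "nat list \<Rightarrow> 'b::comm_ring_1 \<Rightarrow> nat \<Rightarrow> nat \<Rightarrow> nat \<Rightarrow> 'b" where
  "minor3 js z a b c = det3 (\<lambda>i k. Gmat js z i ([a, b, c] ! k))"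

text \<open>Field norm N_{K/Q} of the minor: product of its Galois conjugates
  sigma_k (zeta_n \<mapsto> zeta_n^k), k coprime to n.\<close>
definition minor_norm :: "nat \<Rightarrow> nat list \<Rightarrow> nat \<Rightarrow> nat \<Rightarrow> nat \<Rightarrow> complex" where
  "minor_norm n js a b c = (\<Prod>k\<in>{k. k < n \<and> coprime k n}. minor3 js (zeta n ^ k) a b c)"

definition P_bad :: "nat \<Rightarrow> nat list \<Rightarrow> nat set" where
  "P_bad n js = {p. prime p \<and> (\<exists>a b c. a < b \<and> b < c \<and> c < n \<and>
       minor3 js (zeta n) a b c \<noteq> 0 \<and>
       (\<exists>m::int. minor_norm n js a b c = of_int m \<and> int p dvd \<bar>m\<bar>))}"

section \<open>Linear codes (vectors of length n are functions nat => 'a vanishing outside {..<n})\<close>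

definition fscale :: "'a::field \<Rightarrow> (nat \<Rightarrow> 'a) \<Rightarrow> (nat \<Rightarrow> 'a)" where
  "fscale c v = (\<lambda>l. c * v l)"

definition gen_code :: "nat \<Rightarrow> nat \<Rightarrow> (nat \<Rightarrow> nat \<Rightarrow> 'a::field) \<Rightarrow> (nat \<Rightarrow> 'a) set" where
  "gen_code n k M = {(\<lambda>l. if l < n then (\<Sum>i<k. c i * M i l) else 0) | c. True}"

definition code_dim :: "(nat \<Rightarrow> 'a::field) set \<Rightarrow> nat" where
  "code_dim C = vector_space.dim (fscale :: 'a \<Rightarrow> _) C"

definition hweight :: "nat \<Rightarrow> (nat \<Rightarrow> 'a::zero) \<Rightarrow> nat" where
  "hweight n v = card {l. l < n \<and> v l \<noteq> 0}"

definition min_dist :: "nat \<Rightarrow> (nat \<Rightarrow> 'a::zero) set \<Rightarrow> nat" where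
  "min_dist n C = Min {hweight n v | v. v \<in> C \<and> v \<noteq> 0}"

definition is_MDS :: "nat \<Rightarrow> (nat \<Rightarrow> 'a::field) set \<Rightarrow> bool" where
  "is_MDS n C \<longleftrightarrow> min_dist n C = n - code_dim C + 1"

definition cshift :: "nat \<Rightarrow> (nat \<Rightarrow> 'a::zero) \<Rightarrow> (nat \<Rightarrow> 'a)" where
  "cshift n v = (\<lambda>l. if l < n then v ((l + n - 1) mod n) else 0)"

definition is_cyclic :: "nat \<Rightarrow> (nat \<Rightarrow> 'a::zero) set \<Rightarrow> bool" where
  "is_cyclic n C \<longleftrightarrow> (\<forall>v\<in>C. cshift n v \<in> C)"

text \<open>Equivalence of codes: column permutation and nonzero column scaling
  (change of generator matrix is built in, since codes are sets).\<close>
definition code_equiv :: "nat \<Rightarrow> (nat \<Rightarrow> 'a::field) set \<Rightarrow> (nat \<Rightarrow> 'a) set \<Rightarrow> bool" where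
  "code_equiv n C D \<longleftrightarrow> (\<exists>\<sigma> s. (\<sigma> permutes {..<n}) \<and> (\<forall>l<n. s l \<noteq> 0) \<and>
      D = (\<lambda>v. \<lambda>l. if l < n then s l * v (\<sigma> l) else 0) ` C)"

definition GRS :: "nat \<Rightarrow> nat \<Rightarrow> (nat \<Rightarrow> 'a::field) \<Rightarrow> (nat \<Rightarrow> 'a) \<Rightarrow> (nat \<Rightarrow> 'a) set" where
  "GRS n k x v = gen_code n k (\<lambda>i l. v l * x l ^ i)"

definition RS_type :: "nat \<Rightarrow> (nat \<Rightarrow> 'a::field) set \<Rightarrow> bool" where
  "RS_type n C \<longleftrightarrow> (\<exists>x v. inj_on x {..<n} \<and> (\<forall>l<n. v l \<noteq> 0) \<and>
      code_equiv n (GRS n (code_dim C) x v) C)"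

end

theory Submission
  imports Defs Jordan_Normal_Form.Char_Poly Jordan_Normal_Form.Determinant
begin


lemma zeta_pow: "zeta n ^ k = cis (2 * pi * real k / real n)"
  by (simp add: zeta_def DeMoivre mult_ac)

lemma zeta_pow_n: "n > 0 \<Longrightarrow> zeta n ^ n = 1"
  by (simp add: zeta_pow)

lemma zeta_pow_mod: "n > 0 \<Longrightarrow> zeta n ^ k = zeta n ^ (k mod n)"
proof -
  assume n: "n>0"
  have "zeta n ^ k = (zeta n ^ n) ^ (k div n) * zeta n ^ (k mod n)"
    unfolding power_mult[symmetric] power_add[symmetric] by simp
  also have "\<dots> = zeta n ^ (k mod n)" using zeta_pow_n[OF n] by simp
  finally show ?thesis .
qed

lemma zeta_inj: "n > 0 \<Longrightarrow> inj_on (\<lambda>k. zeta n ^ k) {..<n}"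
  using bij_betw_roots_unity[of n] unfolding bij_betw_def zeta_pow by simp

lemma zeta_pow_eq_1: "n > 0 \<Longrightarrow> zeta n ^ k = 1 \<longleftrightarrow> n dvd k"
proof -
  assume n: "n > 0"
  have "zeta n ^ k = 1 \<longleftrightarrow> zeta n ^ (k mod n) = zeta n ^ 0" using zeta_pow_mod[OF n, of k] by simp
  also have "\<dots> \<longleftrightarrow> k mod n = 0" using inj_onD[OF zeta_inj[OF n], of "k mod n" 0] n by auto
  finally show ?thesis by auto
qed

lemma zeta_div: assumes "d dvd n" "n > 0" shows "zeta n ^ (j * (n div d)) = zeta d ^ j"
proof -
  from assms have d: "d > 0" by (metis dvd_0_left_iff gr0I less_numeral_extra(3))
  have "real (j * (n div d)) / real n = real j / real d" using assms d
    by (simp add: real_of_nat_div field_simps)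
  then show ?thesis unfolding zeta_pow by (metis times_divide_eq_right)
qed

lemma zeta_norm [simp]: "norm (zeta n ^ k) = 1"
  by (simp add: zeta_pow)

lemma geom_root: "w ^ n = (1::complex) \<Longrightarrow> w \<noteq> 1 \<Longrightarrow> (\<Sum>i<n. w^i) = 0"
  using geometric_sum[of w n] by simp

definition zp :: "int poly \<Rightarrow> nat \<Rightarrow> nat \<Rightarrow> complex" where
  "zp g n k = poly (of_int_poly g) (zeta n ^ k)"

definition circ :: "int poly \<Rightarrow> nat \<Rightarrow> int mat" where
  "circ g n = mat n n (\<lambda>(i,j). \<Sum>e\<le>degree g. if (e + j) mod n = i then poly.coeff g e else 0)"

definition Fm :: "nat \<Rightarrow> complex mat" where "Fm n = mat n n (\<lambda>(k,i). zeta n ^ (k*i))"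
definition Fi :: "nat \<Rightarrow> complex mat" where "Fi n = mat n n (\<lambda>(i,l). zeta n ^ (i*(n-l)) / of_nat n)"
definition Dg :: "int poly \<Rightarrow> nat \<Rightarrow> complex mat" where
  "Dg g n = mat n n (\<lambda>(k,j). if k = j then zp g n k else 0)"

lemma Fm_Fi: assumes n: "n>0" shows "Fm n * Fi n = 1\<^sub>m n"
proof (rule eq_matI)
  fix k l assume kl: "k < dim_row (1\<^sub>m n)" "l < dim_col (1\<^sub>m n)"
  then have k: "k<n" and l: "l<n" by auto
  define w where "w = zeta n ^ (k + (n - l))"
  have "(Fm n * Fi n) $$ (k,l) = (\<Sum>i\<in>{0..<n}. zeta n ^ (k*i) * (zeta n ^ (i*(n-l)) / of_nat n))"
    using k l by (simp add: Fm_def Fi_def scalar_prod_def)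
  also have "\<dots> = (\<Sum>i\<in>{0..<n}. w ^ i / of_nat n)"
    by (intro sum.cong refl) (simp add: w_def power_add[symmetric] power_mult[symmetric] algebra_simps)
  also have "\<dots> = (\<Sum>i<n. w ^ i) / of_nat n"
    by (simp add: sum_divide_distrib lessThan_atLeast0)
  also have "\<dots> = 1\<^sub>m n $$ (k,l)"
  proof (cases "k = l")
    case True
    then have "w = 1" using l n by (simp add: w_def zeta_pow_n)
    then show ?thesis using True k n by simp
  next
    case False
    have "\<not> n dvd (k + (n - l))"
    proof
      assume dv: "n dvd k + (n-l)"
      show False
      proof (cases "k < l")
        case True then have "0 < k+(n-l)" "k+(n-l) < n" using l by auto
        then show False using dv nat_dvd_not_less[of "k+(n-l)" n] by simp
      next
        case c: False then have "k + (n-l) = n + (k-l)" "0 < k-l" "k-l<n" using \<open>k\<noteq>l\<close> l k by auto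
        then have "n dvd n + (k-l)" using dv by metis
        then have "n dvd (k - l)" using dvd_add_right_iff[of n n "k-l"] by simp
        then show False using nat_dvd_not_less[of "k-l" n] \<open>0 < k-l\<close> \<open>k-l<n\<close> by simp
      qed
    qed
    then have "w \<noteq> 1" unfolding w_def zeta_pow_eq_1[OF n] .
    moreover have "w ^ n = 1" unfolding w_def using n
      by (metis mult.commute power_mult power_one zeta_pow_n)
    ultimately show ?thesis using geom_root[of w n] False k l by simp
  qed
  finally show "(Fm n * Fi n) $$ (k,l) = 1\<^sub>m n $$ (k,l)" .
qed (auto simp: Fm_def Fi_def)

lemma Fi_Fm: assumes n: "n>0" shows "Fi n * Fm n = 1\<^sub>m n"
  by (rule mat_mult_left_right_inverse[OF _ _ Fm_Fi[OF n]]) (auto simp: Fm_def Fi_def)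

lemma zp_altdef: "zp g n k = (\<Sum>e\<le>degree g. of_int (poly.coeff g e) * (zeta n ^ k) ^ e)"
  unfolding zp_def poly_altdef by (simp add: of_int_hom.degree_map_poly_hom)

lemma Fm_circ: assumes n: "n>0"
  shows "Fm n * map_mat of_int (circ g n) = Dg g n * Fm n"
proof (rule eq_matI)
  fix k j assume "k < dim_row (Dg g n * Fm n)" "j < dim_col (Dg g n * Fm n)"
  then have k: "k<n" and j: "j<n" by (auto simp: Dg_def Fm_def)
  have "(Fm n * map_mat of_int (circ g n)) $$ (k,j) =
     (\<Sum>i\<in>{0..<n}. zeta n ^ (k*i) * of_int (\<Sum>e\<le>degree g. if (e + j) mod n = i then poly.coeff g e else 0))"
    using k j by (simp add: Fm_def circ_def scalar_prod_def)
  also have "\<dots> = (\<Sum>i\<in>{0..<n}. \<Sum>e\<le>degree g. if (e + j) mod n = i then zeta n ^ (k*i) * of_int (poly.coeff g e) else 0)"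
    by (auto simp: sum_distrib_left intro!: sum.cong)
  also have "\<dots> = (\<Sum>e\<le>degree g. \<Sum>i\<in>{0..<n}. if (e + j) mod n = i then zeta n ^ (k*i) * of_int (poly.coeff g e) else 0)"
    by (rule sum.swap)
  also have "\<dots> = (\<Sum>e\<le>degree g. zeta n ^ (k*((e + j) mod n)) * of_int (poly.coeff g e))"
    using n by (intro sum.cong refl) (simp add: sum.delta)
  also have "\<dots> = (\<Sum>e\<le>degree g. zeta n ^ (k*j) * (of_int (poly.coeff g e) * (zeta n ^ k) ^ e))"
  proof (intro sum.cong refl)
    fix e
    have "zeta n ^ (k*((e + j) mod n)) = (zeta n ^ ((e + j) mod n)) ^ k" by (metis power_mult mult.commute)
    also have "\<dots> = (zeta n ^ (e + j)) ^ k" using zeta_pow_mod[OF n, of "e+j"] by simp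
    also have "\<dots> = zeta n ^ (k*j) * (zeta n ^ k) ^ e"
      by (simp add: power_add power_mult[symmetric] algebra_simps)
    finally show "zeta n ^ (k*((e + j) mod n)) * of_int (poly.coeff g e) = zeta n ^ (k*j) * (of_int (poly.coeff g e) * (zeta n ^ k) ^ e)"
      by simp
  qed
  also have "\<dots> = zp g n k * zeta n ^ (k*j)"
    by (simp add: zp_altdef sum_distrib_left mult.commute)
  also have "\<dots> = (Dg g n * Fm n) $$ (k,j)"
  proof -
    have "(Dg g n * Fm n) $$ (k,j) = (\<Sum>i = 0..<n. (if k = i then zp g n k else 0) * zeta n ^ (i * j))"
      using k j by (simp add: Dg_def Fm_def scalar_prod_def)
    also have "\<dots> = (\<Sum>i = 0..<n. if k = i then zp g n k * zeta n ^ (k * j) else 0)"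
      by (intro sum.cong) auto
    also have "\<dots> = zp g n k * zeta n ^ (k * j)" using k by (simp add: sum.delta)
    finally show ?thesis by simp
  qed
  finally show "(Fm n * map_mat of_int (circ g n)) $$ (k,j) = (Dg g n * Fm n) $$ (k,j)" .
qed (auto simp: Fm_def Dg_def circ_def)

lemma full_prod_int:
  assumes n: "n > 0"
  shows "(\<Prod>k<n. [:- zp g n k, 1:]) = of_int_poly (char_poly (circ g n))"
proof -
  let ?M = "map_mat (of_int :: int \<Rightarrow> complex) (circ g n)"
  have carr: "?M \<in> carrier_mat n n" "Dg g n \<in> carrier_mat n n" "Fm n \<in> carrier_mat n n" "Fi n \<in> carrier_mat n n"
    by (auto simp: circ_def Dg_def Fm_def Fi_def)
  have "?M = (Fi n * Fm n) * ?M" using carr Fi_Fm[OF n] by simp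
  also have "\<dots> = Fi n * (Fm n * ?M)" using carr by (simp add: assoc_mult_mat)
  also have "\<dots> = Fi n * Dg g n * Fm n" using carr Fm_circ[OF n] by (simp add: assoc_mult_mat)
  finally have eq: "?M = Fi n * Dg g n * Fm n" .
  have "similar_mat ?M (Dg g n)"
    unfolding similar_mat_def
    by (rule exI[of _ "Fi n"], rule exI[of _ "Fm n"], rule similar_mat_witI[OF Fi_Fm[OF n] Fm_Fi[OF n] eq])
       (use carr in auto)
  then have "char_poly ?M = char_poly (Dg g n)" by (rule char_poly_similar)
  also have "\<dots> = (\<Prod>a\<leftarrow>diag_mat (Dg g n). [:- a, 1:])"
    by (rule char_poly_upper_triangular[OF carr(2)]) (auto simp: Dg_def)
  also have "\<dots> = (\<Prod>k<n. [:- zp g n k, 1:])"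
    by (simp add: diag_mat_def Dg_def o_def prod.distinct_set_conv_list[symmetric] lessThan_atLeast0)
  finally have 1: "char_poly ?M = (\<Prod>k<n. [:- zp g n k, 1:])" .
  have 2: "char_poly ?M = of_int_poly (char_poly (circ g n))"
    by (rule of_int_hom.char_poly_hom[of _ n]) (simp add: circ_def)
  show ?thesis using 1 2 by simp
qed


lemma divpos: "(d::nat) dvd n \<Longrightarrow> n > 0 \<Longrightarrow> n div d > 0"
  by (metis div_greater_zero_iff dvd_imp_le dvd_0_left_iff gr0I)

lemma div_div_self': assumes a: "(d::nat) dvd n" "n > 0" shows "n div (n div d) = d"
proof -
  have q: "n div d > 0" using divpos a .
  have "n div (n div d) = (d * (n div d)) div (n div d)" using a by simp
  also have "\<dots> = d" using q by simp
  finally show ?thesis .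
qed

lemma decomp_bij:
  fixes n :: nat
  assumes n: "n > 0"
  shows "bij_betw (\<lambda>(d,j). j * (n div d)) (SIGMA d:{d. d dvd n}. {j. j<d \<and> coprime j d}) {..<n}"
  unfolding bij_betw_def
proof
  have key: "gcd (j * (n div d)) n = n div d" if "d dvd n" "coprime j d" for d j
  proof -
    have "n = (n div d) * d" using that by simp
    then have "gcd (j * (n div d)) n = gcd ((n div d) * j) ((n div d) * d)" by (simp add: mult.commute)
    also have "\<dots> = (n div d) * gcd j d" by (simp add: gcd_mult_distrib_nat)
    finally show ?thesis using that by simp
  qed
  show "inj_on (\<lambda>(d,j). j * (n div d)) (SIGMA d:{d. d dvd n}. {j. j<d \<and> coprime j d})"
  proof (rule inj_onI, clarify)
    fix d j d' j'
    assume a: "d dvd n" "j < d" "coprime j d" "d' dvd n" "j' < d'" "coprime j' d'"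
      and eq: "j * (n div d) = j' * (n div d')"
    have "n div d = n div d'" using key[of d j] key[of d' j'] a eq by metis
    then have dd: "d = d'" using a n
      by (metis div_div_self')
    have "n div d > 0" using a n by (simp add: divpos)
    then have "j = j'" using eq dd by simp
    with dd show "d = d' \<and> j = j'" by simp
  qed
  show "(\<lambda>(d,j). j * (n div d)) ` (SIGMA d:{d. d dvd n}. {j. j<d \<and> coprime j d}) = {..<n}"
  proof
    show "(\<lambda>(d,j). j * (n div d)) ` (SIGMA d:{d. d dvd n}. {j. j<d \<and> coprime j d}) \<subseteq> {..<n}"
    proof clarify
      fix d j assume a: "d dvd n" "j < d" "coprime j d"
      have "j * (n div d) < d * (n div d)" using a n divpos[of d n]
        by (intro mult_less_mono1) auto
      also have "\<dots> = n" using a by simp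
      finally show "j * (n div d) < n" .
    qed
    show "{..<n} \<subseteq> (\<lambda>(d,j). j * (n div d)) ` (SIGMA d:{d. d dvd n}. {j. j<d \<and> coprime j d})"
    proof
      fix k assume k: "k \<in> {..<n}"
      define g where "g = gcd k n"
      have g0: "g > 0" using n by (simp add: g_def)
      have gk: "g dvd k" and gn: "g dvd n" by (auto simp: g_def)
      define d where "d = n div g"
      define j where "j = k div g"
      have "d dvd n" unfolding d_def using gn by (metis dvd_div_mult_self dvd_triv_left)
      moreover have "coprime j d" unfolding j_def d_def g_def using n by (simp add: div_gcd_coprime)
      moreover have "j < d"
      proof -
        from gk obtain a where a: "k = g*a" by (auto elim: dvdE)
        from gn obtain b where b: "n = g*b" by (auto elim: dvdE)
        show ?thesis unfolding j_def d_def a b using k g0 a b by auto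
      qed
      moreover have "n div d = g" unfolding d_def using gn g0 n by (simp add: div_div_self')
      then have "k = j * (n div d)" using gk by (simp add: j_def)
      ultimately show "k \<in> (\<lambda>(d,j). j * (n div d)) ` (SIGMA d:{d. d dvd n}. {j. j<d \<and> coprime j d})"
        by force
    qed
  qed
qed

lemma prod_decomp:
  fixes h :: "complex \<Rightarrow> 'b::comm_monoid_mult"
  assumes n: "n > 0"
  shows "(\<Prod>k<n. h (zeta n ^ k)) = (\<Prod>d | d dvd n. \<Prod>j | j<d \<and> coprime j d. h (zeta d ^ j))"
proof -
  have fin: "finite {d. d dvd n}" using n by simp
  have "(\<Prod>d | d dvd n. \<Prod>j | j<d \<and> coprime j d. h (zeta d ^ j))
      = (\<Prod>(d,j)\<in>(SIGMA d:{d. d dvd n}. {j. j<d \<and> coprime j d}). h (zeta d ^ j))"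
    using fin by (subst prod.Sigma) auto
  also have "\<dots> = (\<Prod>(d,j)\<in>(SIGMA d:{d. d dvd n}. {j. j<d \<and> coprime j d}). h (zeta n ^ (j * (n div d))))"
    using n by (intro prod.cong refl) (auto simp: zeta_div)
  also have "\<dots> = (\<Prod>k<n. h (zeta n ^ k))"
    using prod.reindex_bij_betw[OF decomp_bij[OF n], of "\<lambda>k. h (zeta n ^ k)"]
    by (simp add: case_prod_unfold)
  finally show ?thesis by simp
qed

lemma int_quot:
  fixes B C :: "int poly" and X :: "complex poly"
  assumes mon: "lead_coeff B = 1" and eq: "of_int_poly B * X = of_int_poly C"
  shows "\<exists>D. X = of_int_poly D"
proof -
  have B0: "B \<noteq> 0" using mon by auto
  obtain D R where pd: "pseudo_divmod C B = (D, R)" by fastforce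
  have 1: "C = B * D + R" using pseudo_divmod(1)[OF B0 pd] mon by simp
  have 2: "R = 0 \<or> degree R < degree B" using pseudo_divmod(2)[OF B0 pd] .
  have "of_int_poly C = of_int_poly B * of_int_poly D + (of_int_poly R :: complex poly)"
    unfolding 1 by (simp add: hom_distribs)
  then have 3: "of_int_poly B * (X - of_int_poly D) = (of_int_poly R :: complex poly)"
    using eq by (simp add: algebra_simps)
  have B'0: "(of_int_poly B :: complex poly) \<noteq> 0" using B0 by simp
  show ?thesis
  proof (rule ccontr)
    assume "\<not> ?thesis"
    then have X0: "X - of_int_poly D \<noteq> 0" by auto
    have "degree (of_int_poly B * (X - of_int_poly D) :: complex poly) = degree B + degree (X - of_int_poly D)"
      using B'0 X0 by (simp add: degree_mult_eq)
    then have "degree B \<le> degree (of_int_poly R :: complex poly)" using 3 by simp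
    moreover have "(of_int_poly R :: complex poly) \<noteq> 0" using 3 B'0 X0 by auto
    ultimately show False using 2 by simp
  qed
qed

definition Pp :: "int poly \<Rightarrow> nat \<Rightarrow> complex poly" where
  "Pp g n = (\<Prod>k\<in>{k. k<n \<and> coprime k n}. [:- zp g n k, 1:])"

lemma Pp_monic: "lead_coeff (Pp g n) = 1"
  unfolding Pp_def by (simp add: lead_coeff_prod)

lemma Pp_int: "n > 0 \<Longrightarrow> \<exists>Q. Pp g n = of_int_poly Q"
proof (induction n rule: less_induct)
  case (less n)
  define S where "S = {d. d dvd n \<and> d \<noteq> n}"
  have finS: "finite S" using less.prems by (auto simp: S_def)
  have IH: "\<forall>d\<in>S. \<exists>Q. Pp g d = of_int_poly Q"
  proof
    fix d assume "d \<in> S"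
    then have "d dvd n" "d \<noteq> n" by (auto simp: S_def)
    then have "0 < d" "d < n" using less.prems
      by (auto intro: Nat.gr0I dest: dvd_imp_le)
    then show "\<exists>Q. Pp g d = of_int_poly Q" using less.IH by blast
  qed
  then obtain Qf where Qf: "\<forall>d\<in>S. Pp g d = of_int_poly (Qf d)" by metis
  have ds: "{d. d dvd n} = insert n S" by (auto simp: S_def)
  have "(\<Prod>k<n. [:- zp g n k, 1:]) = (\<Prod>d | d dvd n. Pp g d)"
    using prod_decomp[OF less.prems, of "\<lambda>z. [:- poly (of_int_poly g) z, 1:]"]
    by (simp add: Pp_def zp_def)
  also have "\<dots> = Pp g n * (\<Prod>d\<in>S. Pp g d)" unfolding ds using finS
    by (subst prod.insert) (auto simp: S_def)
  also have "(\<Prod>d\<in>S. Pp g d) = (\<Prod>d\<in>S. of_int_poly (Qf d))" using Qf by simp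
  also have "\<dots> = of_int_poly (\<Prod>d\<in>S. Qf d)" by (simp add: hom_distribs)
  finally have eq: "of_int_poly (\<Prod>d\<in>S. Qf d) * Pp g n = of_int_poly (char_poly (circ g n))"
    using full_prod_int[OF less.prems, of g] by (simp add: mult.commute)
  have "lead_coeff (of_int_poly (\<Prod>d\<in>S. Qf d) :: complex poly) = 1"
  proof -
    have "(\<Prod>d\<in>S. Pp g d) = of_int_poly (\<Prod>d\<in>S. Qf d)" using Qf by (simp add: hom_distribs)
    moreover have "lead_coeff (\<Prod>d\<in>S. Pp g d) = 1" by (simp add: lead_coeff_prod Pp_monic)
    ultimately show ?thesis by simp
  qed
  then have "lead_coeff (\<Prod>d\<in>S. Qf d) = 1" by simp
  from int_quot[OF this eq] show ?case .
qed

lemma norm_integral: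
  assumes n: "n > 0"
  shows "\<exists>m::int. (\<Prod>k\<in>{k. k<n \<and> coprime k n}. poly (of_int_poly g) (zeta n ^ k)) = of_int m"
proof -
  define K where "K = {k. k<n \<and> coprime k n}"
  obtain Q where Q: "Pp g n = of_int_poly Q" using Pp_int[OF n] by blast
  have "poly (Pp g n) 0 = (\<Prod>k\<in>K. - zp g n k)"
    by (simp add: Pp_def poly_prod K_def)
  also have "\<dots> = (\<Prod>k\<in>K. (-1) * zp g n k)" by simp
  also have "\<dots> = (\<Prod>k\<in>K. -1) * (\<Prod>k\<in>K. zp g n k)" by (rule prod.distrib)
  also have "\<dots> = (-1) ^ card K * (\<Prod>k\<in>K. zp g n k)" by simp
  finally have e: "poly (Pp g n) 0 = (-1) ^ card K * (\<Prod>k\<in>K. zp g n k)" .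
  have "(\<Prod>k\<in>K. zp g n k) = ((-1) ^ card K * (-1) ^ card K) * (\<Prod>k\<in>K. zp g n k)"
    by (simp flip: power_mult_distrib)
  also have "\<dots> = (-1) ^ card K * poly (Pp g n) 0" unfolding e by (simp add: mult.assoc)
  also have "\<dots> = of_int ((-1) ^ card K * poly Q 0)" unfolding Q by (simp add: of_int_hom.poly_map_poly_0)
  finally show ?thesis unfolding K_def zp_def by blast
qed


lemma p3: "(z::'b::comm_ring_1) ^ (3*a) = (z^a)^3" by (metis mult.commute power_mult)
lemma p2: "(z::'b::comm_ring_1) ^ (2*a) = (z^a)^2" by (metis mult.commute power_mult)

lemma id013: "(y*z^3 - z*y^3) - (x*z^3 - z*x^3) + (x*y^3 - y*x^3) =
  (y-x)*(z-x)*(z-y)*(x+y+(z::'b::comm_ring_1))"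
  by (simp add: algebra_simps power3_eq_cube)

lemma id023: "(y^2*z^3 - z^2*y^3) - (x^2*z^3 - z^2*x^3) + (x^2*y^3 - y^2*x^3) =
  (y-x)*(z-x)*(z-y)*(x*y+x*z+y*(z::'b::comm_ring_1))"
  by (simp add: algebra_simps power3_eq_cube power2_eq_square)

lemma minor3_013: "minor3 [0,1,3] (z::'b::comm_ring_1) a b c =
   (z^b - z^a)*(z^c - z^a)*(z^c - z^b)*(z^a+z^b+z^c)"
  unfolding minor3_def det3_def Gmat_def using id013[of "z^b" "z^c" "z^a"] by (simp add: p3)

lemma minor3_023: "minor3 [0,2,3] (z::'b::comm_ring_1) a b c =
   (z^b - z^a)*(z^c - z^a)*(z^c - z^b)*(z^a*z^b+z^a*z^c+z^b*z^c)"
  unfolding minor3_def det3_def Gmat_def using id023[of "z^b" "z^c" "z^a"] by (simp add: p3 p2)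

lemma minor3_poly: "minor3 js (z::'b::comm_ring_1) a b c = poly (of_int_poly (minor3 js [:0,1:] a b c)) z"
  unfolding minor3_def det3_def Gmat_def by (simp add: hom_distribs poly_power)

lemma unit_cnj: "norm (u::complex) = 1 \<Longrightarrow> u * cnj u = 1"
  using complex_norm_square[of u] by simp

lemma sum3_ne0:
  assumes n: "n > 0" and n3: "\<not> 3 dvd n" and abc: "a<b" "b<c" "c<n"
  shows "zeta n^a + zeta n^b + zeta n^c \<noteq> 0"
proof
  assume s: "zeta n^a + zeta n^b + zeta n^c = 0"
  define X where "X = zeta n ^ a"
  define u where "u = zeta n ^ (b - a)"
  define v where "v = zeta n ^ (c - a)"
  have Xu: "zeta n ^ b = X * u" unfolding X_def u_def using abc by (simp flip: power_add)
  have Xv: "zeta n ^ c = X * v" unfolding X_def v_def using abc by (simp flip: power_add)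
  have "norm X = 1" by (simp add: X_def)
  then have X0: "X \<noteq> 0" by auto
  have "X * (1 + u + v) = 0" using s Xu Xv by (simp add: X_def algebra_simps)
  then have uv: "1 + u + v = 0" using X0 by simp
  have nu: "norm u = 1" and nv: "norm v = 1" by (simp_all add: u_def v_def)
  have "v = -(1 + u)" using uv by (metis add.commute add_eq_0_iff2)
  then have "norm (1 + u) = 1" using nv by (metis norm_minus_cancel)
  then have "(1 + u) * cnj (1 + u) = 1" by (rule unit_cnj)
  then have "u * ((1 + u) * (1 + cnj u)) = u" by simp
  then have "(1 + u) * (u + u * cnj u) = u" by (simp add: algebra_simps)
  then have "(1 + u) * (u + 1) = u" using unit_cnj[OF nu] by simp
  then have "u^2 + u + 1 = 0" by (simp add: algebra_simps power2_eq_square)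
  then have "(u - 1) * (u^2 + u + 1) = 0" by simp
  then have "u ^ 3 = 1" by (simp add: algebra_simps power2_eq_square power3_eq_cube)
  then have "zeta n ^ (3 * (b - a)) = 1" unfolding u_def by (metis mult.commute power_mult)
  then have "n dvd 3 * (b - a)" using zeta_pow_eq_1[OF n] by simp
  moreover have "coprime n 3"
  proof -
    define g where "g = gcd n 3"
    have g3: "g dvd 3" by (simp add: g_def)
    then have "g \<le> 3" by (rule dvd_imp_le) simp
    then have "g = 0 \<or> g = 1 \<or> g = 2 \<or> g = 3" by auto
    moreover have "g \<noteq> 3" using n3 unfolding g_def by (metis gcd_dvd1)
    moreover have "g \<noteq> 0" using g3 by (metis dvd_0_left_iff zero_neq_numeral)
    moreover have "g \<noteq> 2"
    proof
      assume "g = 2"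
      then have "(2::nat) dvd 3" using g3 by simp
      then show False by presburger
    qed
    ultimately have "g = 1" by blast
    then show ?thesis unfolding g_def using coprime_iff_gcd_eq_1 by blast
  qed
  ultimately have "n dvd (b - a)" using coprime_dvd_mult_right_iff[of n 3 "b-a"] by simp
  moreover have "0 < b - a" "b - a < n" using abc by auto
  ultimately show False using nat_dvd_not_less[of "b-a" n] by simp
qed

lemma cnj_zeta: "cnj (zeta n ^ k) * zeta n ^ k = 1"
  using unit_cnj[of "zeta n ^ k"] by (simp add: mult.commute)

lemma sum3'_ne0:
  assumes n: "n > 0" and n3: "\<not> 3 dvd n" and abc: "a<b" "b<c" "c<n"
  shows "zeta n^a * zeta n^b + zeta n^a * zeta n^c + zeta n^b * zeta n^c \<noteq> 0"
proof -
  let ?X = "zeta n ^ a" and ?Y = "zeta n ^ b" and ?Z = "zeta n ^ c"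
  have "?X * ?Y * ?Z * cnj (?X + ?Y + ?Z) = ?Y * ?Z * (cnj ?X * ?X) + ?X * ?Z * (cnj ?Y * ?Y) + ?X * ?Y * (cnj ?Z * ?Z)"
    by (simp add: algebra_simps)
  also have "\<dots> = ?Y * ?Z * 1 + ?X * ?Z * 1 + ?X * ?Y * 1" by (simp only: cnj_zeta)
  also have "\<dots> = ?X * ?Y + ?X * ?Z + ?Y * ?Z" by (simp add: algebra_simps)
  finally have e: "?X * ?Y * ?Z * cnj (?X + ?Y + ?Z) = ?X * ?Y + ?X * ?Z + ?Y * ?Z" .
  have "?X * ?Y * ?Z \<noteq> 0" using zeta_norm[of n] by (metis mult_eq_0_iff norm_zero zero_neq_one)
  moreover have "cnj (?X + ?Y + ?Z) \<noteq> 0" by (subst complex_cnj_zero_iff) (rule sum3_ne0[OF assms])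
  ultimately show ?thesis using e by (metis mult_eq_0_iff)
qed

lemma minor3_C_ne0:
  assumes n: "n > 0" and n3: "\<not> 3 dvd n" and js: "js = [0, 1, 3] \<or> js = [0, 2, 3]"
    and abc: "a<b" "b<c" "c<n"
  shows "minor3 js (zeta n) a b c \<noteq> 0"
proof -
  have d: "zeta n ^ x \<noteq> zeta n ^ y" if "x < n" "y < n" "x \<noteq> y" for x y
    using inj_onD[OF zeta_inj[OF n], of x y] that by auto
  have V: "(zeta n^b - zeta n^a)*(zeta n^c - zeta n^a)*(zeta n^c - zeta n^b) \<noteq> 0"
    using d[of b a] d[of c a] d[of c b] abc by auto
  show ?thesis using js
  proof
    assume js: "js = [0,1,3]"
    have "minor3 js (zeta n) a b c = (zeta n^b - zeta n^a)*(zeta n^c - zeta n^a)*(zeta n^c - zeta n^b)*(zeta n^a+zeta n^b+zeta n^c)"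
      unfolding js by (rule minor3_013)
    then show ?thesis using V sum3_ne0[OF n n3 abc] by simp
  next
    assume js: "js = [0,2,3]"
    have "minor3 js (zeta n) a b c = (zeta n^b - zeta n^a)*(zeta n^c - zeta n^a)*(zeta n^c - zeta n^b)*(zeta n^a*zeta n^b+zeta n^a*zeta n^c+zeta n^b*zeta n^c)"
      unfolding js by (rule minor3_023)
    then show ?thesis using V sum3'_ne0[OF n n3 abc] by simp
  qed
qed

lemma minor_norm_int:
  assumes n: "n > 0"
  shows "\<exists>m::int. minor_norm n js a b c = of_int m"
  unfolding minor_norm_def minor3_poly[where z = "zeta n ^ _"]
  using norm_integral[OF n] by blast


lemma Zz_intro: "poly (of_int_poly g) (zeta n) \<in> Zzeta n" unfolding Zzeta_def by blast

lemma Zz_add: assumes "x \<in> Zzeta n" "y \<in> Zzeta n" shows "x + y \<in> Zzeta n"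
proof -
  obtain g h where "x = poly (of_int_poly g) (zeta n)" "y = poly (of_int_poly h) (zeta n)"
    using assms by (auto simp: Zzeta_def)
  then have "x + y = poly (of_int_poly (g + h)) (zeta n)" by (simp add: hom_distribs)
  then show ?thesis by (simp add: Zz_intro)
qed

lemma Zz_mult: assumes "x \<in> Zzeta n" "y \<in> Zzeta n" shows "x * y \<in> Zzeta n"
proof -
  obtain g h where "x = poly (of_int_poly g) (zeta n)" "y = poly (of_int_poly h) (zeta n)"
    using assms by (auto simp: Zzeta_def)
  then have "x * y = poly (of_int_poly (g * h)) (zeta n)" by (simp add: hom_distribs)
  then show ?thesis by (simp add: Zz_intro)
qed

lemma Zz_uminus: assumes "x \<in> Zzeta n" shows "- x \<in> Zzeta n"
proof -
  obtain g where "x = poly (of_int_poly g) (zeta n)"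
    using assms by (auto simp: Zzeta_def)
  then have "- x = poly (of_int_poly (- g)) (zeta n)" by (simp add: hom_distribs)
  then show ?thesis by (simp add: Zz_intro)
qed

lemma Zz_diff: "x \<in> Zzeta n \<Longrightarrow> y \<in> Zzeta n \<Longrightarrow> x - y \<in> Zzeta n"
  using Zz_add[of x n "- y"] Zz_uminus[of y n] by simp

lemma Zz_of_int: "of_int m \<in> Zzeta n"
proof -
  have "poly (of_int_poly [:m:]) (zeta n) = of_int m" by (simp add: of_int_hom.map_poly_pCons_hom)
  then show ?thesis using Zz_intro[of "[:m:]" n] by simp
qed

lemma Zz_one: "1 \<in> Zzeta n" using Zz_of_int[of 1 n] by simp
lemma Zz_zero: "0 \<in> Zzeta n" using Zz_of_int[of 0 n] by simp
lemma Zz_of_nat: "of_nat m \<in> Zzeta n" using Zz_of_int[of "int m" n] by simp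

lemma Zz_zeta: "zeta n \<in> Zzeta n"
proof -
  have "poly (of_int_poly [:0,1:]) (zeta n) = zeta n" by (simp add: of_int_hom.map_poly_pCons_hom)
  then show ?thesis using Zz_intro[of "[:0,1:]" n] by simp
qed

lemma Zz_pow: "x \<in> Zzeta n \<Longrightarrow> x ^ k \<in> Zzeta n"
  by (induction k) (auto intro: Zz_mult Zz_one)

lemma Zz_prod: "(\<And>i. i \<in> A \<Longrightarrow> f i \<in> Zzeta n) \<Longrightarrow> prod f A \<in> Zzeta n"
  by (induction A rule: infinite_finite_induct) (auto intro: Zz_mult Zz_one)

lemma Zz_minor: "minor3 js (zeta n ^ k) a b c \<in> Zzeta n"
  unfolding minor3_def det3_def Gmat_def
  by (intro Zz_add Zz_diff Zz_mult Zz_pow Zz_zeta)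

locale rho =
  fixes n p :: nat and \<rho> :: "complex \<Rightarrow> 'a::field"
  assumes n7: "n \<ge> 7" and prime: "prime p" and pn: "\<not> p dvd n"
    and hom1: "\<rho> 1 = 1"
    and hom_add: "\<forall>x\<in>Zzeta n. \<forall>y\<in>Zzeta n. \<rho> (x + y) = \<rho> x + \<rho> y"
    and hom_mult: "\<forall>x\<in>Zzeta n. \<forall>y\<in>Zzeta n. \<rho> (x * y) = \<rho> x * \<rho> y"
    and onto: "\<rho> ` Zzeta n = UNIV"
    and over_p: "\<rho> (of_nat p) = 0"
begin

definition w where "w = \<rho> (zeta n)"

lemma radd: "x \<in> Zzeta n \<Longrightarrow> y \<in> Zzeta n \<Longrightarrow> \<rho> (x + y) = \<rho> x + \<rho> y"
  using hom_add by blast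
lemma rmult: "x \<in> Zzeta n \<Longrightarrow> y \<in> Zzeta n \<Longrightarrow> \<rho> (x * y) = \<rho> x * \<rho> y"
  using hom_mult by blast

lemma r0: "\<rho> 0 = 0"
proof -
  have "\<rho> 0 = \<rho> 0 + \<rho> 0" using radd[OF Zz_zero Zz_zero] by simp
  then show ?thesis by (metis add_cancel_left_right)
qed

lemma rminus: "x \<in> Zzeta n \<Longrightarrow> \<rho> (- x) = - \<rho> x"
proof -
  assume x: "x \<in> Zzeta n"
  have "\<rho> x + \<rho> (- x) = 0" using radd[of x "- x"] Zz_uminus[OF x] x r0 by simp
  then show ?thesis by (metis neg_eq_iff_add_eq_0)
qed

lemma rdiff: "x \<in> Zzeta n \<Longrightarrow> y \<in> Zzeta n \<Longrightarrow> \<rho> (x - y) = \<rho> x - \<rho> y"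
  using radd[of x "- y"] rminus[of y] Zz_uminus[of y n] by simp

lemma rpow: "x \<in> Zzeta n \<Longrightarrow> \<rho> (x ^ k) = \<rho> x ^ k"
  by (induction k) (auto simp: hom1 rmult Zz_pow)

lemma rnat: "\<rho> (of_nat m) = of_nat m"
proof (induction m)
  case 0 then show ?case by (simp add: r0)
next
  case (Suc m)
  have "\<rho> (of_nat (Suc m)) = \<rho> (1 + of_nat m)" by simp
  also have "\<dots> = 1 + of_nat m" using radd[OF Zz_one Zz_of_nat] Suc hom1 by simp
  finally show ?case by simp
qed

lemma rint: "\<rho> (of_int m) = of_int m"
proof (cases "m \<ge> 0")
  case True
  then have "of_int m = (of_nat (nat m) :: complex)" "of_int m = (of_nat (nat m) :: 'a)" by simp_all
  then show ?thesis using rnat by metis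
next
  case False
  then have "of_int m = - (of_nat (nat (-m)) :: complex)" "of_int m = - (of_nat (nat (-m)) :: 'a)" by simp_all
  then show ?thesis using rnat rminus[OF Zz_of_nat] by metis
qed

lemma rprod: "(\<And>i. i \<in> A \<Longrightarrow> f i \<in> Zzeta n) \<Longrightarrow> \<rho> (prod f A) = (\<Prod>i\<in>A. \<rho> (f i))"
proof (induction A rule: infinite_finite_induct)
  case (insert x F)
  then show ?case by (simp add: rmult Zz_prod)
qed (auto simp: hom1)

lemma rpoly: "\<rho> (poly (of_int_poly g) (zeta n)) = poly (of_int_poly g) w"
proof (induction g)
  case 0
  then show ?case by (simp add: r0)
next
  case (pCons a g)
  have "\<rho> (poly (of_int_poly (pCons a g)) (zeta n)) = \<rho> (of_int a + zeta n * poly (of_int_poly g) (zeta n))"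
    by (simp add: of_int_hom.map_poly_pCons_hom)
  also have "\<dots> = of_int a + w * poly (of_int_poly g) w"
    using pCons by (simp add: radd rmult Zz_of_int Zz_mult Zz_zeta Zz_intro rint w_def)
  also have "\<dots> = poly (of_int_poly (pCons a g)) w"
    by (simp add: of_int_hom.map_poly_pCons_hom)
  finally show ?case .
qed

lemma rminor: "\<rho> (minor3 js (zeta n) a b c) = minor3 js w a b c"
  using rpoly[of "minor3 js [:0,1:] a b c"] minor3_poly[of js "zeta n" a b c] minor3_poly[of js w a b c]
  by simp

lemma wn: "w ^ n = 1"
  using rpow[OF Zz_zeta, of n] zeta_pow_n[of n] n7 hom1 by (simp add: w_def)

lemma charp: "of_nat p = (0::'a)" using over_p rnat by simp

lemma CHARp: "CHAR('a) = p"
proof -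
  have "CHAR('a) dvd p" using charp by (simp add: of_nat_eq_0_iff_char_dvd)
  moreover have "\<forall>m. m dvd p \<longrightarrow> m = 1 \<or> m = p" using prime by (simp add: prime_nat_iff)
  ultimately have "CHAR('a) = 1 \<or> CHAR('a) = p" by blast
  then show ?thesis using CHAR_not_1' by auto
qed

lemma int_zero: assumes "(of_int m :: 'a) = 0" shows "int p dvd m"
proof -
  have a: "(of_int \<bar>m\<bar> :: 'a) = 0" using assms by (cases "m \<ge> 0") auto
  have "(of_nat (nat \<bar>m\<bar>) :: 'a) = of_int \<bar>m\<bar>" by (rule of_nat_nat) simp
  then have "(of_nat (nat \<bar>m\<bar>) :: 'a) = 0" using a by simp
  then have "CHAR('a) dvd nat \<bar>m\<bar>" using of_nat_eq_0_iff_char_dvd by blast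
  then have "p dvd nat \<bar>m\<bar>" using CHARp by simp
  then have "int p dvd int (nat \<bar>m\<bar>)" by (simp only: int_dvd_int_iff)
  then have "int p dvd \<bar>m\<bar>" by simp
  then show ?thesis by simp
qed

lemma minor_ne0:
  assumes n3: "\<not> 3 dvd n" and js: "js = [0, 1, 3] \<or> js = [0, 2, 3]" and pb: "p \<notin> P_bad n js"
    and abc: "a < b" "b < c" "c < n"
  shows "minor3 js w a b c \<noteq> 0"
proof
  assume z: "minor3 js w a b c = 0"
  have n: "n > 0" using n7 by simp
  define K where "K = {k. k < n \<and> coprime k n}"
  have finK: "finite K" by (simp add: K_def)
  have K1: "1 \<in> K" using n7 by (simp add: K_def)
  have "minor_norm n js a b c = (\<Prod>k\<in>K. minor3 js (zeta n ^ k) a b c)"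
    by (simp add: minor_norm_def K_def)
  also have "\<dots> = minor3 js (zeta n ^ 1) a b c * (\<Prod>k\<in>K-{1}. minor3 js (zeta n ^ k) a b c)"
    using finK K1 by (simp add: prod.remove)
  finally have e: "minor_norm n js a b c = minor3 js (zeta n) a b c * (\<Prod>k\<in>K-{1}. minor3 js (zeta n ^ k) a b c)"
    by simp
  have "\<rho> (minor_norm n js a b c) = 0"
    unfolding e using Zz_minor[of js n 1 a b c]
    by (subst rmult) (auto intro!: Zz_prod Zz_minor simp: rminor z)
  moreover obtain m where m: "minor_norm n js a b c = of_int m" using minor_norm_int[OF n] by blast
  ultimately have "(of_int m :: 'a) = 0" using rint by simp
  then have "int p dvd \<bar>m\<bar>" using int_zero by simp
  moreover have "minor3 js (zeta n) a b c \<noteq> 0" using minor3_C_ne0[OF n n3 js abc] .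
  ultimately have "p \<in> P_bad n js" unfolding P_bad_def using prime abc m by blast
  with pb show False by simp
qed

end


lemma sum3: "(\<Sum>i<3. f (i::nat)) = f 0 + f 1 + (f 2 :: 'b::comm_monoid_add)"
  by (simp add: eval_nat_numeral add.assoc)

lemma det3_kernel:
  fixes M :: "nat \<Rightarrow> nat \<Rightarrow> 'a::field"
  assumes d: "det3 M \<noteq> 0"
    and e0: "c0 * M 0 0 + c1 * M 1 0 + c2 * M 2 0 = 0"
    and e1: "c0 * M 0 1 + c1 * M 1 1 + c2 * M 2 1 = 0"
    and e2: "c0 * M 0 2 + c1 * M 1 2 + c2 * M 2 2 = 0"
  shows "c0 = 0 \<and> c1 = 0 \<and> c2 = 0"
proof -
  have "c0 * det3 M = (c0 * M 0 0 + c1 * M 1 0 + c2 * M 2 0) * (M 1 1 * M 2 2 - M 1 2 * M 2 1)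
     - (c0 * M 0 1 + c1 * M 1 1 + c2 * M 2 1) * (M 1 0 * M 2 2 - M 1 2 * M 2 0)
     + (c0 * M 0 2 + c1 * M 1 2 + c2 * M 2 2) * (M 1 0 * M 2 1 - M 1 1 * M 2 0)"
    by (simp add: det3_def algebra_simps)
  also have "\<dots> = 0" by (simp only: e0 e1 e2) simp
  finally have a: "c0 * det3 M = 0" .
  have "c1 * det3 M = - (c0 * M 0 0 + c1 * M 1 0 + c2 * M 2 0) * (M 0 1 * M 2 2 - M 0 2 * M 2 1)
     + (c0 * M 0 1 + c1 * M 1 1 + c2 * M 2 1) * (M 0 0 * M 2 2 - M 0 2 * M 2 0)
     - (c0 * M 0 2 + c1 * M 1 2 + c2 * M 2 2) * (M 0 0 * M 2 1 - M 0 1 * M 2 0)"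
    by (simp add: det3_def algebra_simps)
  also have "\<dots> = 0" by (simp only: e0 e1 e2) simp
  finally have b: "c1 * det3 M = 0" .
  have "c2 * det3 M = (c0 * M 0 0 + c1 * M 1 0 + c2 * M 2 0) * (M 0 1 * M 1 2 - M 0 2 * M 1 1)
     - (c0 * M 0 1 + c1 * M 1 1 + c2 * M 2 1) * (M 0 0 * M 1 2 - M 0 2 * M 1 0)
     + (c0 * M 0 2 + c1 * M 1 2 + c2 * M 2 2) * (M 0 0 * M 1 1 - M 0 1 * M 1 0)"
    by (simp add: det3_def algebra_simps)
  also have "\<dots> = 0" by (simp only: e0 e1 e2) simp
  finally have c: "c2 * det3 M = 0" .
  show ?thesis using a b c d by simp
qed

lemma s12: "minor3 js (z::'b::comm_ring_1) b a c = - minor3 js z a b c"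
  unfolding minor3_def det3_def by (simp add: algebra_simps)
lemma s23: "minor3 js (z::'b::comm_ring_1) a c b = - minor3 js z a b c"
  unfolding minor3_def det3_def by (simp add: algebra_simps)

interpretation fsv: vector_space "fscale :: 'a::field \<Rightarrow> (nat \<Rightarrow> 'a) \<Rightarrow> (nat \<Rightarrow> 'a)"
  by unfold_locales (auto simp: fscale_def algebra_simps fun_eq_iff)

locale wctx =
  fixes w :: "'a::field" and n :: nat and js :: "nat list"
  assumes n7: "n \<ge> 7" and wn: "w ^ n = 1" and js: "js = [0,1,3] \<or> js = [0,2,3]"
    and mnz: "\<And>a b c. a < b \<Longrightarrow> b < c \<Longrightarrow> c < n \<Longrightarrow> minor3 js w a b c \<noteq> 0"
begin

lemma mnz':
  assumes "a < n" "b < n" "c < n" "a \<noteq> b" "b \<noteq> c" "a \<noteq> c"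
  shows "minor3 js w a b c \<noteq> 0"
proof -
  have o: "a < b \<and> b < c \<or> a < c \<and> c < b \<or> b < a \<and> a < c \<or> b < c \<and> c < a \<or> c < a \<and> a < b \<or> c < b \<and> b < a"
    using assms by linarith
  then show ?thesis
  proof (elim disjE conjE)
    assume "a < b" "b < c" then show ?thesis using mnz assms by blast
  next
    assume "a < c" "c < b" then show ?thesis using mnz[of a c b] s23[of js w a b c] assms by simp
  next
    assume "b < a" "a < c" then show ?thesis using mnz[of b a c] s12[of js w a b c] assms by simp
  next
    assume "b < c" "c < a" then show ?thesis using mnz[of b c a] s12[of js w a b c] s23[of js w b a c] assms by simp
  next
    assume "c < a" "a < b" then show ?thesis using mnz[of c a b] s23[of js w a b c] s12[of js w a c b] assms by simp
  next
    assume "c < b" "b < a" then show ?thesis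
      using mnz[of c b a] s12[of js w a b c] s23[of js w b a c] s12[of js w b c a] assms by simp
  qed
qed

lemma vfac: "minor3 js z a b c \<noteq> 0 \<Longrightarrow> z^a \<noteq> z^b \<and> z^a \<noteq> z^c \<and> z^b \<noteq> (z::'a)^c"
  using js minor3_013[of z a b c] minor3_023[of z a b c] by auto

lemma w_inj: "inj_on (\<lambda>l. w ^ l) {..<n}"
proof (rule inj_onI, rule ccontr)
  fix x y assume xy: "x \<in> {..<n}" "y \<in> {..<n}" "w ^ x = w ^ y" "x \<noteq> y"
  define c where "c = (if x \<noteq> 0 \<and> y \<noteq> 0 then 0 else if x \<noteq> 1 \<and> y \<noteq> 1 then 1 else (2::nat))"
  have c: "c \<noteq> x" "c \<noteq> y" using xy(4) by (auto simp: c_def)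
  have "c < n" using n7 by (auto simp: c_def)
  then have "minor3 js w x y c \<noteq> 0" using mnz'[of x y c] xy c by auto
  then show False using vfac xy by blast
qed

lemma w_pow_mod: "w ^ k = w ^ (k mod n)"
proof -
  have "w ^ k = (w ^ n) ^ (k div n) * w ^ (k mod n)"
    unfolding power_mult[symmetric] power_add[symmetric] by simp
  then show ?thesis using wn by simp
qed

lemma w_pow_eq_1: "w ^ k = 1 \<longleftrightarrow> n dvd k"
proof -
  have "w ^ k = 1 \<longleftrightarrow> w ^ (k mod n) = w ^ 0" using w_pow_mod[of k] by simp
  also have "\<dots> \<longleftrightarrow> k mod n = 0" using inj_onD[OF w_inj, of "k mod n" 0] n7 by auto
  finally show ?thesis by auto
qed

definition rv :: "(nat \<Rightarrow> 'a) \<Rightarrow> nat \<Rightarrow> 'a" where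
  "rv x = (\<lambda>l. if l < n then \<Sum>i<3. x i * w ^ (js!i * l) else 0)"

lemma C_eq: "gen_code n 3 (\<lambda>i l. w ^ (js!i*l)) = range rv"
  by (auto simp: gen_code_def rv_def)

lemma KL:
  assumes "a < n" "b < n" "c < n" "a \<noteq> b" "b \<noteq> c" "a \<noteq> c"
    and "rv x a = 0" "rv x b = 0" "rv x c = 0"
  shows "x 0 = 0 \<and> x 1 = 0 \<and> x 2 = 0"
proof -
  let ?M = "\<lambda>i k. Gmat js w i ([a,b,c]!k)"
  have d: "det3 ?M \<noteq> 0" using mnz'[OF assms(1-6)] by (simp add: minor3_def)
  show ?thesis
    by (rule det3_kernel[OF d]) (use assms in \<open>simp_all add: rv_def sum3 Gmat_def\<close>)
qed

lemma rv_diff: "rv x - rv y = rv (\<lambda>i. x i - y i)"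
  by (auto simp: rv_def fun_eq_iff sum3 algebra_simps)

lemma rv_eq: "rv x = rv y \<Longrightarrow> x 0 = y 0 \<and> x 1 = y 1 \<and> x 2 = y 2"
proof -
  assume "rv x = rv y"
  then have "rv (\<lambda>i. x i - y i) = 0" using rv_diff[of x y] by simp
  then have "rv (\<lambda>i. x i - y i) 0 = 0" "rv (\<lambda>i. x i - y i) 1 = 0" "rv (\<lambda>i. x i - y i) 2 = 0"
    by (simp_all)
  from KL[OF _ _ _ _ _ _ this] n7 show ?thesis by simp
qed

lemma rv_0: "x 0 = 0 \<Longrightarrow> x 1 = 0 \<Longrightarrow> x 2 = 0 \<Longrightarrow> rv x = 0"
  by (auto simp: rv_def fun_eq_iff sum3)

lemma cyclic: "is_cyclic n (range rv)"
  unfolding is_cyclic_def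
proof
  fix v assume "v \<in> range rv"
  then obtain x where v: "v = rv x" by auto
  define x' where "x' i = x i * w ^ (js!i * (n - 1))" for i
  have "cshift n v = rv x'"
  proof
    fix l
    show "cshift n v l = rv x' l"
    proof (cases "l < n")
      case True
      have "(l + n - 1) mod n < n" using n7 by simp
      then have "cshift n v l = (\<Sum>i<3. x i * w ^ (js!i * ((l + n - 1) mod n)))"
        using True by (simp add: cshift_def v rv_def)
      also have "\<dots> = (\<Sum>i<3. x' i * w ^ (js!i * l))"
      proof (intro sum.cong refl)
        fix i
        have "w ^ (js!i * ((l + n - 1) mod n)) = (w ^ ((l + n - 1) mod n)) ^ (js!i)"
          by (metis mult.commute power_mult)
        also have "\<dots> = (w ^ (l + (n - 1))) ^ (js!i)" using w_pow_mod[of "l + n - 1"] n7 by simp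
        also have "\<dots> = w ^ (js!i * l) * w ^ (js!i * (n - 1))"
          by (simp add: power_add power_mult[symmetric] algebra_simps)
        finally show "x i * w ^ (js!i * ((l + n - 1) mod n)) = x' i * w ^ (js!i * l)"
          by (simp add: x'_def)
      qed
      finally show ?thesis using True by (simp add: rv_def)
    qed (simp add: cshift_def rv_def)
  qed
  then show "cshift n v \<in> range rv" by simp
qed

definition r :: "nat \<Rightarrow> nat \<Rightarrow> 'a" where "r i = rv (\<lambda>j. if j = i then 1 else 0)"

lemma r_distinct: "r 0 \<noteq> r 1" "r 0 \<noteq> r 2" "r 1 \<noteq> r 2"
  using rv_eq[of "\<lambda>j. if j = 0 then 1 else 0" "\<lambda>j. if j = 1 then 1 else 0"]
    rv_eq[of "\<lambda>j. if j = 0 then 1 else 0" "\<lambda>j. if j = 2 then 1 else 0"]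
    rv_eq[of "\<lambda>j. if j = 1 then 1 else 0" "\<lambda>j. if j = 2 then 1 else 0"]
  by (auto simp: r_def)

lemma rv_comb: "rv x = fscale (x 0) (r 0) + fscale (x 1) (r 1) + fscale (x 2) (r 2)"
  by (auto simp: rv_def r_def fscale_def fun_eq_iff sum3 algebra_simps)

lemma dim3: "code_dim (range rv) = 3"
proof -
  define B where "B = {r 0, r 1, r 2}"
  have cB: "card B = 3" using r_distinct by (simp add: B_def)
  have sub: "B \<subseteq> range rv" by (auto simp: B_def r_def)
  have sp: "range rv \<subseteq> fsv.span B"
  proof
    fix v assume "v \<in> range rv"
    then obtain x where v: "v = rv x" by auto
    have "r 0 \<in> fsv.span B" "r 1 \<in> fsv.span B" "r 2 \<in> fsv.span B"
      by (auto simp: B_def intro: fsv.span_base)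
    then show "v \<in> fsv.span B" unfolding v rv_comb
      by (intro fsv.span_add fsv.span_scale)
  qed
  have ind: "\<not> fsv.dependent B"
  proof
    assume "fsv.dependent B"
    then obtain u where u: "\<exists>v\<in>B. u v \<noteq> 0" "(\<Sum>v\<in>B. fscale (u v) v) = 0"
      using fsv.dependent_finite[of B] by (auto simp: B_def)
    have "(\<Sum>v\<in>B. fscale (u v) v) = fscale (u (r 0)) (r 0) + fscale (u (r 1)) (r 1) + fscale (u (r 2)) (r 2)"
      using r_distinct by (simp add: B_def add.assoc)
    also have "\<dots> = rv (\<lambda>i. u (r i))" by (simp add: rv_comb)
    finally have "rv (\<lambda>i. u (r i)) = rv (\<lambda>i. 0)" using u(2) rv_0[of "\<lambda>i. 0"] by simp
    from rv_eq[OF this] u(1) show False by (auto simp: B_def)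
  qed
  show ?thesis unfolding code_dim_def
    by (rule fsv.dim_unique[OF sub sp ind cB])
qed

end


context wctx
begin

lemma hw_le: "hweight n v \<le> n"
  unfolding hweight_def by (rule order.trans[OF card_mono[of "{..<n}"]]) auto

lemma lower:
  assumes v: "v \<in> range rv" "v \<noteq> 0"
  shows "n - 2 \<le> hweight n v"
proof -
  obtain x where vx: "v = rv x" using v by auto
  define Z where "Z = {l. l < n \<and> v l = 0}"
  have finZ: "finite Z" and Zsub: "Z \<subseteq> {..<n}" by (auto simp: Z_def)
  have cZ: "card Z \<le> 2"
  proof (rule ccontr)
    assume "\<not> card Z \<le> 2"
    then have "3 \<le> card Z" by simp
    then obtain T where T: "T \<subseteq> Z" "card T = 3" by (metis obtain_subset_with_card_n)
    then obtain a b c where abc: "T = {a,b,c}" "a \<noteq> b" "b \<noteq> c" "a \<noteq> c" by (auto simp: card_3_iff)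
    have "a \<in> Z" "b \<in> Z" "c \<in> Z" using T abc by auto
    then have "a < n" "b < n" "c < n" "rv x a = 0" "rv x b = 0" "rv x c = 0" by (auto simp: Z_def vx)
    from KL[OF this(1-3) abc(2-4) this(4-6)] have "rv x = 0" by (intro rv_0) auto
    then show False using v vx by simp
  qed
  have "{l. l < n \<and> v l \<noteq> 0} = {..<n} - Z" by (auto simp: Z_def)
  then have "hweight n v = n - card Z" unfolding hweight_def using finZ Zsub by (simp add: card_Diff_subset)
  then show ?thesis using cZ by simp
qed

definition xc :: "nat \<Rightarrow> 'a" where
  "xc i = (if i = 0 then w^(js!2) - w^(js!1) else if i = 1 then w^(js!0) - w^(js!2) else w^(js!1) - w^(js!0))"

lemma xc_minor: "l < n \<Longrightarrow> rv xc l = minor3 js w 0 1 l"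
  by (simp add: rv_def sum3 xc_def minor3_def det3_def Gmat_def algebra_simps)

lemma minor_rep0: "minor3 js (z::'b::comm_ring_1) 0 1 0 = 0" "minor3 js z 0 1 1 = 0"
  by (simp_all add: minor3_def det3_def Gmat_def algebra_simps)

lemma attained: "rv xc \<noteq> 0 \<and> hweight n (rv xc) = n - 2"
proof -
  have "{l. l < n \<and> rv xc l \<noteq> 0} = {2..<n}"
  proof (rule equalityI; rule subsetI)
    fix l assume "l \<in> {l. l < n \<and> rv xc l \<noteq> 0}"
    then have l: "l < n" "rv xc l \<noteq> 0" by auto
    have m: "minor3 js w 0 1 l \<noteq> 0" using xc_minor[OF l(1)] l(2) by simp
    have "l \<noteq> 0" proof assume "l = 0" then show False using m minor_rep0(1)[of w] by simp qed
    moreover have "l \<noteq> 1" proof assume "l = 1" then show False using m minor_rep0(2)[of w] by simp qed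
    ultimately show "l \<in> {2..<n}" using l by auto
  next
    fix l assume "l \<in> {2..<n}"
    then have l: "2 \<le> l" "l < n" by auto
    then have "minor3 js w 0 1 l \<noteq> 0" by (intro mnz) auto
    then show "l \<in> {l. l < n \<and> rv xc l \<noteq> 0}" using xc_minor l by auto
  qed
  then have h: "hweight n (rv xc) = n - 2" by (simp add: hweight_def)
  have "rv xc 2 \<noteq> 0" using xc_minor[of 2] mnz[of 0 1 2] n7 by simp
  then have "rv xc \<noteq> 0" by auto
  with h show ?thesis by simp
qed

lemma mds: "is_MDS n (range rv)"
proof -
  let ?S = "{hweight n v | v. v \<in> range rv \<and> v \<noteq> 0}"
  have fin: "finite ?S" by (rule finite_subset[of _ "{..n}"]) (auto intro: hw_le)
  have "Min ?S = n - 2"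
  proof (rule Min_eqI[OF fin])
    show "\<And>y. y \<in> ?S \<Longrightarrow> n - 2 \<le> y" using lower by auto
    show "n - 2 \<in> ?S" using attained by force
  qed
  then show ?thesis unfolding is_MDS_def min_dist_def dim3 using n7 by simp
qed

end


lemma sum_fun_apply: "(\<Sum>i\<in>A. f i) x = (\<Sum>i\<in>A. f i x)"
  by (induction A rule: infinite_finite_induct) auto

context wctx
begin

definition ev :: "nat \<Rightarrow> nat \<Rightarrow> 'a" where "ev e = (\<lambda>l. if l < n then w ^ (e * l) else 0)"

lemma r_val: assumes "a < 3" shows "r a l = (if l < n then w ^ (js!a * l) else 0)"
proof -
  have "a = 0 \<or> a = 1 \<or> a = 2" using assms by auto
  then show ?thesis by (auto simp: r_def rv_def sum3)
qed

lemma nonRS: "\<not> RS_type n (range rv)"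
proof
  assume "RS_type n (range rv)"
  then obtain xx vv \<sigma> s where \<sigma>: "\<sigma> permutes {..<n}" and s: "\<forall>l<n. s l \<noteq> 0"
    and CE: "range rv = (\<lambda>v l. if l < n then s l * v (\<sigma> l) else 0) ` GRS n 3 xx vv"
    unfolding RS_type_def code_equiv_def dim3 by blast
  have \<sigma>n: "\<sigma> l < n" if "l < n" for l using permutes_in_image[OF \<sigma>, of l] that by simp
  define sv where "sv l = s l * vv (\<sigma> l)" for l
  have rep: "\<exists>e. \<forall>l<n. y l = sv l * (\<Sum>i<3. e i * xx (\<sigma> l) ^ i)" if y: "y \<in> range rv" for y
  proof -
    obtain u where u: "u \<in> GRS n 3 xx vv" and yu: "y = (\<lambda>l. if l<n then s l * u (\<sigma> l) else 0)"
      using y CE by blast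
    from u obtain e where ue: "u = (\<lambda>l. if l < n then \<Sum>i<3. e i * (vv l * xx l ^ i) else 0)"
      unfolding GRS_def gen_code_def by blast
    have "\<forall>l<n. y l = sv l * (\<Sum>i<3. e i * xx (\<sigma> l) ^ i)"
      using \<sigma>n by (auto simp: yu ue sv_def sum_distrib_left algebra_simps)
    then show ?thesis by blast
  qed
  define h where "h t = (\<lambda>l. if l < n then sv l ^ 2 * xx (\<sigma> l) ^ t else 0)" for t
  define H where "H = h ` {..<5}"
  have finH: "finite H" and cH: "card H \<le> 5" unfolding H_def
    using card_image_le[of "{..<5::nat}" h] by auto
  have prodspan: "ev (js!a + js!b) \<in> fsv.span H" if ab: "a < 3" "b < 3" for a b
  proof -
    have "r a \<in> range rv" "r b \<in> range rv" by (auto simp: r_def)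
    then obtain e e' where e: "\<forall>l<n. r a l = sv l * (\<Sum>i<3. e i * xx (\<sigma> l) ^ i)"
      and e': "\<forall>l<n. r b l = sv l * (\<Sum>i<3. e' i * xx (\<sigma> l) ^ i)" using rep by meson
    have "ev (js!a + js!b) = (\<Sum>i<3. \<Sum>i'<3. fscale (e i * e' i') (h (i + i')))"
    proof
      fix l
      show "ev (js!a + js!b) l = (\<Sum>i<3. \<Sum>i'<3. fscale (e i * e' i') (h (i + i'))) l"
      proof (cases "l < n")
        case True
        have "ev (js!a + js!b) l = r a l * r b l" using True ab
          by (simp add: ev_def r_val power_add algebra_simps)
        also have "\<dots> = (sv l * (\<Sum>i<3. e i * xx (\<sigma> l) ^ i)) * (sv l * (\<Sum>i<3. e' i * xx (\<sigma> l) ^ i))"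
          using e e' True by simp
        also have "\<dots> = (\<Sum>i<3. \<Sum>i'<3. e i * e' i' * (sv l ^ 2 * xx (\<sigma> l) ^ (i + i')))"
          by (simp add: sum_distrib_left sum_distrib_right power_add power2_eq_square algebra_simps)
        also have "\<dots> = (\<Sum>i<3. \<Sum>i'<3. fscale (e i * e' i') (h (i + i'))) l"
          using True by (simp add: sum_fun_apply fscale_def h_def)
        finally show ?thesis .
      next
        case False
        then show ?thesis by (simp add: sum_fun_apply fscale_def h_def ev_def)
      qed
    qed
    also have "\<dots> \<in> fsv.span H"
      by (intro fsv.span_sum fsv.span_scale fsv.span_base) (auto simp: H_def)
    finally show ?thesis .
  qed
  define P :: "(nat \<times> nat) set" where "P = {(0,0),(0,1),(1,1),(0,2),(1,2),(2,2)}"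
  define E where "E = (\<lambda>(a,b). js!a + js!b) ` P"
  have Ev: "E = {0,1,2,3,4,6} \<or> E = {0,2,3,4,5,6}" using js by (auto simp: E_def P_def)
  then have cE: "card E = 6" and Ele: "\<forall>e\<in>E. e \<le> 6" and finE: "finite E" by auto
  have injev: "inj_on ev E"
  proof (rule inj_onI)
    fix e e' assume ee: "e \<in> E" "e' \<in> E" "ev e = ev e'"
    then have "ev e 1 = ev e' 1" by simp
    then have "w ^ e = w ^ e'" using n7 by (simp add: ev_def)
    moreover have "e < n" "e' < n" using Ele ee n7 by auto
    ultimately show "e = e'" using inj_onD[OF w_inj] by auto
  qed
  define T where "T = ev ` E"
  have cT: "card T = 6" unfolding T_def using card_image[OF injev] cE by simp
  have finT: "finite T" unfolding T_def using finE by simp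
  have TH: "T \<subseteq> fsv.span H" unfolding T_def E_def P_def using prodspan by auto
  have indT: "\<not> fsv.dependent T"
  proof
    assume "fsv.dependent T"
    then obtain u where u: "\<exists>t\<in>T. u t \<noteq> 0" "(\<Sum>t\<in>T. fscale (u t) t) = 0"
      using fsv.dependent_finite[OF finT] by auto
    have s0: "(\<Sum>e\<in>E. fscale (u (ev e)) (ev e)) = 0"
      using u(2) unfolding T_def by (simp add: sum.reindex[OF injev])
    define q where "q = (\<Sum>e\<in>E. Polynomial.monom (u (ev e)) e)"
    have cq: "poly.coeff q i = (if i \<in> E then u (ev i) else 0)" for i
      unfolding q_def coeff_sum using finE by (simp add: sum.delta)
    obtain e0 where e0: "e0 \<in> E" "u (ev e0) \<noteq> 0" using u(1) unfolding T_def by auto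
    have q0: "q \<noteq> 0" using cq[of e0] e0 by auto
    have dq: "degree q \<le> 6" by (rule degree_le) (use Ele cq in auto)
    have roots: "(\<lambda>l. w ^ l) ` {..<n} \<subseteq> {x. poly q x = 0}"
    proof clarify
      fix l assume l: "l < n"
      have "poly q (w ^ l) = (\<Sum>e\<in>E. u (ev e) * (w ^ l) ^ e)"
        unfolding q_def poly_sum by (simp add: poly_monom)
      also have "\<dots> = (\<Sum>e\<in>E. fscale (u (ev e)) (ev e)) l"
        using l by (simp add: sum_fun_apply fscale_def ev_def power_mult[symmetric] mult.commute)
      also have "\<dots> = 0" using s0 by simp
      finally show "poly q (w ^ l) = 0" .
    qed
    have "n = card ((\<lambda>l. w ^ l) ` {..<n})" using card_image[OF w_inj] by simp
    also have "\<dots> \<le> card {x. poly q x = 0}" using roots poly_roots_finite[OF q0] by (rule card_mono[rotated])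
    also have "\<dots> \<le> degree q" using card_poly_roots_bound[OF q0] .
    finally show False using dq n7 by simp
  qed
  have "card T \<le> card H" using fsv.independent_span_bound[OF finH indT TH] by simp
  then show False using cT cH by simp
qed

end


lemma frob_nat:
  assumes "prime CHAR('a::comm_ring_1)"
  shows "(of_nat m :: 'a) ^ CHAR('a) = of_nat m"
proof (induction m)
  case 0 then show ?case using assms by (simp add: prime_gt_0_nat power_0_left)
next
  case (Suc m)
  have "(of_nat (Suc m) :: 'a) ^ CHAR('a) = (of_nat m + 1) ^ CHAR('a)" by (simp add: add.commute)
  also have "\<dots> = of_nat m ^ CHAR('a) + 1 ^ CHAR('a)" by (rule freshmans_dream[OF assms refl])
  finally show ?case using Suc by simp
qed

lemma frob_int:
  assumes "prime CHAR('a::comm_ring_1)"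
  shows "(of_int c :: 'a) ^ CHAR('a) = of_int c"
proof -
  define C where "C = int CHAR('a)"
  have C0: "C > 0" using assms by (simp add: C_def prime_gt_0_nat)
  have "(of_int c :: 'a) = of_int (c mod C + C * (c div C))" by simp
  also have "\<dots> = of_int (c mod C)"
  proof -
    have "(of_int C :: 'a) = 0" by (simp add: C_def)
    then show ?thesis by (simp only: of_int_add of_int_mult) simp
  qed
  also have "\<dots> = of_nat (nat (c mod C))" using C0 by simp
  finally have e: "(of_int c :: 'a) = of_nat (nat (c mod C))" .
  show ?thesis unfolding e by (rule frob_nat[OF assms])
qed

lemma frob_pow: "(y::'b::monoid_mult) ^ p = y \<Longrightarrow> y ^ (p ^ k) = y"
  by (induction k) (auto simp: power_mult power_Suc2)

context rho
begin

lemma card_main: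
  assumes W: "wctx w n js"
  shows "card (UNIV :: 'a set) = p ^ ord n p"
proof -
  interpret W: wctx w n js by (rule W)
  define f where "f = ord n p"
  define q where "q = p ^ f"
  have pC: "prime CHAR('a)" using CHARp prime by simp
  have cop: "coprime n p" using prime pn by (metis coprime_commute prime_imp_coprime)
  have f0: "f > 0" using cop by (simp add: f_def)
  have p2: "p \<ge> 2" using prime by (simp add: prime_ge_2_nat)
  have "p \<le> p ^ f" using f0 p2 by (simp add: self_le_power)
  then have q1: "q \<ge> 2" unfolding q_def using p2 by simp
  have "[p ^ f = 1] (mod n)" unfolding f_def by (rule ord)
  then have ndq: "n dvd q - 1" unfolding q_def by (rule cong_to_1_nat)
  have wq: "w ^ q = w"
  proof -
    have "q = Suc (q - 1)" using q1 by simp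
    then have "w ^ q = w ^ (q - 1) * w" by (metis power_Suc2)
    also have "w ^ (q - 1) = 1" using W.w_pow_eq_1 ndq by simp
    finally show ?thesis by simp
  qed
  have fint: "(of_int c :: 'a) ^ (p ^ k) = of_int c" for c k
    using frob_pow[OF frob_int[OF pC]] CHARp by simp
  have frob_add: "(x + y :: 'a) ^ (p ^ k) = x ^ (p ^ k) + y ^ (p ^ k)" for x y k
    by (rule freshmans_dream'[OF pC]) (simp add: CHARp)
  have frob_sum: "(sum g A :: 'a) ^ (p ^ k) = (\<Sum>i\<in>A. g i ^ (p ^ k))" for g :: "nat \<Rightarrow> 'a" and A k
    by (rule freshmans_dream_sum'[OF pC]) (simp add: CHARp)
  have allx: "x ^ q = x" for x :: 'a
  proof -
    obtain z where z: "z \<in> Zzeta n" "x = \<rho> z" using onto by (metis UNIV_I imageE)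
    then obtain g where "z = poly (of_int_poly g) (zeta n)" by (auto simp: Zzeta_def)
    then have "x = poly (of_int_poly g) w" using z rpoly by simp
    also have "\<dots> = (\<Sum>i\<le>degree (of_int_poly g :: 'a poly). poly.coeff (of_int_poly g) i * w ^ i)"
      by (simp add: poly_altdef)
    finally have x: "x = (\<Sum>i\<le>degree (of_int_poly g :: 'a poly). of_int (poly.coeff g i) * w ^ i)" by simp
    have "x ^ q = (\<Sum>i\<le>degree (of_int_poly g :: 'a poly). (of_int (poly.coeff g i) * w ^ i) ^ q)"
      unfolding x q_def by (rule frob_sum)
    also have "\<dots> = (\<Sum>i\<le>degree (of_int_poly g :: 'a poly). of_int (poly.coeff g i) * w ^ i)"
    proof (intro sum.cong refl)
      fix i
      have "(w ^ i) ^ q = w ^ i" by (metis power_mult mult.commute wq)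
      then show "(of_int (poly.coeff g i) * w ^ i) ^ q = of_int (poly.coeff g i) * w ^ i"
        by (simp add: power_mult_distrib fint q_def)
    qed
    finally show ?thesis using x by simp
  qed
  define Q :: "'a poly" where "Q = Polynomial.monom 1 q - [:0, 1:]"
  have "poly.coeff [:0,1::'a:] q = 0" by (rule coeff_eq_0) (use q1 in simp)
  then have cQ: "poly.coeff Q q = 1" by (simp add: Q_def)
  then have Q0: "Q \<noteq> 0" by auto
  have dQ: "degree Q \<le> q" unfolding Q_def
    by (rule order.trans[OF degree_diff_le_max]) (use q1 in \<open>auto simp: degree_monom_eq\<close>)
  have UQ: "(UNIV :: 'a set) = {x. poly Q x = 0}" using allx by (auto simp: Q_def poly_monom)
  have finU: "finite (UNIV :: 'a set)" unfolding UQ using poly_roots_finite[OF Q0] .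
  have up: "card (UNIV :: 'a set) \<le> q" unfolding UQ using card_poly_roots_bound[OF Q0] dQ by simp
  have wne: "w \<noteq> 0"
  proof
    assume "w = 0"
    then have "w ^ n = 0" using n7 by simp
    then show False using W.wn by simp
  qed
  have dist: "w ^ (p ^ i) \<noteq> w ^ (p ^ j)" if ij: "i < j" "j < f" for i j
  proof
    assume eq: "w ^ (p ^ i) = w ^ (p ^ j)"
    have le: "p ^ i \<le> p ^ j" using ij p2 by (simp add: power_increasing)
    have "w ^ (p ^ j) = w ^ (p ^ i) * w ^ (p ^ j - p ^ i)" using le by (simp flip: power_add)
    then have "w ^ (p ^ j - p ^ i) = 1" using eq wne by simp
    then have "n dvd p ^ j - p ^ i" using W.w_pow_eq_1 by simp
    moreover have "p ^ j - p ^ i = p ^ i * (p ^ (j - i) - 1)" using ij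
      by (simp add: diff_mult_distrib2 flip: power_add)
    ultimately have "n dvd p ^ i * (p ^ (j - i) - 1)" by simp
    moreover have "coprime n (p ^ i)" using cop by simp
    ultimately have "n dvd p ^ (j - i) - 1" by (simp add: coprime_dvd_mult_right_iff)
    moreover have "p ^ (j - i) \<ge> 1" using p2 by simp
    ultimately have "[p ^ (j - i) = 1] (mod n)" by (simp add: cong_altdef_nat)
    then have "f dvd j - i" unfolding f_def by (simp only: ord_divides)
    moreover have "0 < j - i" "j - i < f" using ij by auto
    ultimately show False using nat_dvd_not_less[of "j - i" f] by simp
  qed
  define emb :: "(nat \<Rightarrow> nat) \<Rightarrow> 'a" where "emb c = (\<Sum>i<f. of_nat (c i) * w ^ i)" for c
  have inj: "inj_on emb (PiE {..<f} (\<lambda>_. {..<p}))"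
  proof (rule inj_onI, rule ccontr)
    fix c c' assume c: "c \<in> PiE {..<f} (\<lambda>_. {..<p})" and c': "c' \<in> PiE {..<f} (\<lambda>_. {..<p})"
      and eq: "emb c = emb c'" and ne: "c \<noteq> c'"
    obtain i0 where i0: "i0 < f" "c i0 \<noteq> c' i0"
      using c c' ne by (metis PiE_ext lessThan_iff)
    define d where "d i = (of_int (int (c i) - int (c' i)) :: 'a)" for i
    have s0: "(\<Sum>i<f. d i * w ^ i) = 0"
      using eq by (simp add: emb_def d_def algebra_simps sum_subtractf)
    define h where "h = (\<Sum>i<f. Polynomial.monom (d i) i)"
    have ch: "poly.coeff h k = (if k < f then d k else 0)" for k
      unfolding h_def coeff_sum by (simp add: sum.delta)
    have "d i0 \<noteq> 0"
    proof
      assume "d i0 = 0"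
      then have "int p dvd (int (c i0) - int (c' i0))" unfolding d_def by (rule int_zero)
      moreover have "c i0 < p" "c' i0 < p" using c c' i0 by (auto simp: PiE_def Pi_def)
      moreover have "int (c i0) - int (c' i0) \<noteq> 0" using i0(2) by simp
      ultimately have "\<bar>int p\<bar> \<le> \<bar>int (c i0) - int (c' i0)\<bar>" by (intro dvd_imp_le_int) auto
      then show False using \<open>c i0 < p\<close> \<open>c' i0 < p\<close> by linarith
    qed
    then have h0: "h \<noteq> 0" using ch[of i0] i0 by auto
    have dh: "degree h \<le> f - 1" by (rule degree_le) (use ch in auto)
    have roots: "(\<lambda>j. w ^ (p ^ j)) ` {..<f} \<subseteq> {x. poly h x = 0}"
    proof clarify
      fix j assume j: "j < f"
      have "poly h (w ^ (p ^ j)) = (\<Sum>i<f. d i * (w ^ (p ^ j)) ^ i)"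
        unfolding h_def poly_sum by (simp add: poly_monom)
      also have "\<dots> = (\<Sum>i<f. (d i * w ^ i) ^ (p ^ j))"
      proof (intro sum.cong refl)
        fix i
        have "d i ^ (p ^ j) = d i" unfolding d_def by (rule fint)
        then show "d i * (w ^ (p ^ j)) ^ i = (d i * w ^ i) ^ (p ^ j)"
          by (simp add: power_mult_distrib flip: power_mult) (simp add: mult.commute)
      qed
      also have "\<dots> = (\<Sum>i<f. d i * w ^ i) ^ (p ^ j)" by (rule frob_sum[symmetric])
      also have "\<dots> = 0" using s0 p2 by simp
      finally show "poly h (w ^ (p ^ j)) = 0" .
    qed
    have injr: "inj_on (\<lambda>j. w ^ (p ^ j)) {..<f}"
    proof (rule inj_onI, rule ccontr)
      fix i j assume "i \<in> {..<f}" "j \<in> {..<f}" "w ^ (p ^ i) = w ^ (p ^ j)" "i \<noteq> j"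
      then show False using dist[of i j] dist[of j i] by (cases "i < j") auto
    qed
    have "f = card ((\<lambda>j. w ^ (p ^ j)) ` {..<f})" using card_image[OF injr] by simp
    also have "\<dots> \<le> card {x. poly h x = 0}" using roots poly_roots_finite[OF h0] by (rule card_mono[rotated])
    also have "\<dots> \<le> degree h" using card_poly_roots_bound[OF h0] .
    finally show False using dh f0 by simp
  qed
  have "p ^ f = card (PiE {..<f} (\<lambda>_. {..<p}))" by (simp add: card_PiE)
  also have "\<dots> \<le> card (UNIV :: 'a set)" using card_inj_on_le[OF inj _ finU] by simp
  finally show ?thesis using up unfolding q_def f_def by simp
qed

end



theorem mainTheorem6:
  fixes n p :: nat and js :: "nat list" and \<rho> :: "complex \<Rightarrow> 'a::field"
  assumes "n \<ge> 7" and "\<not> 3 dvd n"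
    and "js = [0, 1, 3] \<or> js = [0, 2, 3]"
    and "prime p" and "p \<notin> P_bad n js" and "\<not> p dvd n"
    and hom1: "\<rho> 1 = 1"
    and hom_add: "\<forall>x\<in>Zzeta n. \<forall>y\<in>Zzeta n. \<rho> (x + y) = \<rho> x + \<rho> y"
    and hom_mult: "\<forall>x\<in>Zzeta n. \<forall>y\<in>Zzeta n. \<rho> (x * y) = \<rho> x * \<rho> y"
    and onto: "\<rho> ` Zzeta n = UNIV"
    and over_p: "\<rho> (of_nat p) = 0"
  shows "card (UNIV :: 'a set) = p ^ ord n p
    \<and> is_cyclic n (gen_code n 3 (\<lambda>i l. \<rho> (Gmat js (zeta n) i l)))
    \<and> code_dim (gen_code n 3 (\<lambda>i l. \<rho> (Gmat js (zeta n) i l))) = 3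
    \<and> is_MDS n (gen_code n 3 (\<lambda>i l. \<rho> (Gmat js (zeta n) i l)))
    \<and> \<not> RS_type n (gen_code n 3 (\<lambda>i l. \<rho> (Gmat js (zeta n) i l)))"
proof -
  interpret R: rho n p \<rho>
    by unfold_locales (use assms in auto)
  have n3: "\<not> 3 dvd n" and jsa: "js = [0, 1, 3] \<or> js = [0, 2, 3]" and pb: "p \<notin> P_bad n js"
    using assms by auto
  have W: "wctx R.w n js"
    by unfold_locales (use assms R.wn R.minor_ne0[OF n3 jsa pb] in auto)
  interpret W: wctx R.w n js by (rule W)
  have G: "(\<lambda>i l. \<rho> (Gmat js (zeta n) i l)) = (\<lambda>i l. R.w ^ (js!i*l))"
    by (intro ext) (simp add: Gmat_def R.rpow Zz_zeta R.w_def)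
  have C: "gen_code n 3 (\<lambda>i l. \<rho> (Gmat js (zeta n) i l)) = range W.rv"
    unfolding G by (rule W.C_eq)
  show ?thesis unfolding C using R.card_main[OF W] W.cyclic W.dim3 W.mds W.nonRS by simp
qed

end
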